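(* Let $k$ be a field and let $P=\{0,1,2\}\times\{0,1,2\}$ with the product partial order. Let $M\colon P\to \mathbf{Vect}_k$ be the persistence module with $M_{(0,0)}=0$, $M_{(1,0)}=k$, $M_{(2,0)}=k$, $M_{(0,1)}=k$, $M_{(1,1)}=k^2$, $M_{(2,1)}=k$, $M_{(0,2)}=k$, $M_{(1,2)}=k$, $M_{(2,2)}=0$, whose structure maps between adjacent grid points are: horizontally, $M_{(1,0)}\to M_{(2,0)}$ is the identity, $M_{(0,1)}\to M_{(1,1)}$ is $x\mapsto (x,0)$, $M_{(1,1)}\to M_{(2,1)}$ is $(x,y)\mapsto x+y$, $M_{(0,2)}\to M_{(1,2)}$ is the identity, and all other horizontal maps are $0$; vertically, $M_{(0,1)}\to M_{(0,2)}$ is the identity, $M_{(1,0)}\to M_{(1,1)}$ is $y\mapsto (0,y)$, $M_{(1,1)}\to M_{(1,2)}$ is $(x,y)\mapsto x$, $M_{(2,0)}\to M_{(2,1)}$ is the identity, and all other vertical maps are $0$ (the remaining structure maps are the composites; this diagram commutes). Then $M$ has no good barcode, i.e., there is no multiset $B$ of subsets of $P$ such that for all $x\le y$ in $P$, $\operatorname{rank}(M_{x,y}\colon M_x\to M_y)$ equals the number of elements of $B$ (counted with multiplicity) containing both $x$ and $y$.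
   Context: For a poset $P$, a $P$-persistence module is a functor $M\colon P\to\mathbf{Vect}_k$; $M_{x,y}$ denotes the linear map $M_x\to M_y$ for $x\le y$ (with $M_{x,x}$ the identity). A multiset $B$ of subsets of $P$ is called a good barcode of $M$ if for all $x\le y\in P$, $\operatorname{rank}(M_{x,y})=|\{S\in B : x,y\in S\}|$ (counted with multiplicity). *)

theory Defs
  imports "Jordan_Normal_Form.DL_Rank" "HOL-Library.Multiset"
begin

definition gridP :: "(nat \<times> nat) set" where
  "gridP = {0..2} \<times> {0..2}"

definition gle :: "nat \<times> nat \<Rightarrow> nat \<times> nat \<Rightarrow> bool" where
  "gle x y \<longleftrightarrow> fst x \<le> fst y \<and> snd x \<le> snd y"

definition dimM :: "nat \<times> nat \<Rightarrow> nat" where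
  "dimM x = (if x = (1,1) then 2
             else if x \<in> {(1,0),(2,0),(0,1),(2,1),(0,2),(1,2)} then 1
             else 0)"

text \<open>Horizontal map M_(i,j) -> M_(i+1,j), as a matrix of size dimM(i+1,j) x dimM(i,j)
  (acting on column vectors).\<close>

definition hmap :: "nat \<Rightarrow> nat \<Rightarrow> 'k::field mat" where
  "hmap i j =
    (if (i,j) = (1,0) then 1\<^sub>m 1
     else if (i,j) = (0,1) then mat 2 1 (\<lambda>(r,c). if r = 0 then 1 else 0)
     else if (i,j) = (1,1) then mat 1 2 (\<lambda>(r,c). 1)
     else if (i,j) = (0,2) then 1\<^sub>m 1
     else 0\<^sub>m (dimM (i+1,j)) (dimM (i,j)))"

definition vmap :: "nat \<Rightarrow> nat \<Rightarrow> 'k::field mat" where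
  "vmap i j =
    (if (i,j) = (0,1) then 1\<^sub>m 1
     else if (i,j) = (1,0) then mat 2 1 (\<lambda>(r,c). if r = 1 then 1 else 0)
     else if (i,j) = (1,1) then mat 1 2 (\<lambda>(r,c). if c = 0 then 1 else 0)
     else if (i,j) = (2,0) then 1\<^sub>m 1
     else 0\<^sub>m (dimM (i,j+1)) (dimM (i,j)))"

fun hpath :: "nat \<Rightarrow> nat \<Rightarrow> nat \<Rightarrow> 'k::field mat" where
  "hpath i j 0 = 1\<^sub>m (dimM (i,j))"
| "hpath i j (Suc n) = hmap (i+n) j * hpath i j n"

fun vpath :: "nat \<Rightarrow> nat \<Rightarrow> nat \<Rightarrow> 'k::field mat" where
  "vpath i j 0 = 1\<^sub>m (dimM (i,j))"
| "vpath i j (Suc n) = vmap i (j+n) * vpath i j n"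

text \<open>Structure map M_{x,y} for x \<le> y: go horizontally, then vertically
  (the diagram commutes, so this is the composite along any path).\<close>

definition Mmap :: "nat \<times> nat \<Rightarrow> nat \<times> nat \<Rightarrow> 'k::field mat" where
  "Mmap x y = vpath (fst y) (snd x) (snd y - snd x) * hpath (fst x) (snd x) (fst y - fst x)"

definition map_rank :: "'k::field mat \<Rightarrow> nat" where
  "map_rank A = vec_space.rank (dim_row A) A"

definition good_barcode :: "(nat \<times> nat) set multiset \<Rightarrow> ('k::field) itself \<Rightarrow> bool" where
  "good_barcode B _ \<longleftrightarrow>
     (\<forall>S \<in># B. S \<subseteq> gridP) \<and>
     (\<forall>x \<in> gridP. \<forall>y \<in> gridP. gle x y \<longrightarrow>
        map_rank (Mmap x y :: 'k mat) = size (filter_mset (\<lambda>S. x \<in> S \<and> y \<in> S) B))"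

end

theory Submission
  imports Defs
begin

lemma rank_one1: "map_rank (1\<^sub>m 1 :: 'k::field mat) = 1"
  unfolding map_rank_def
  using vec_space.low_rank_det_zero[of "1\<^sub>m 1 :: 'k mat" 1] by simp

lemma rank_zero1: "map_rank (0\<^sub>m 1 1 :: 'k::field mat) = 0"
  unfolding map_rank_def using vec_space.rank_0I[of 1 1] by simp

lemma M_ae: "(Mmap (1,0) (2,1) :: 'k::field mat) = 1\<^sub>m 1"
  by (simp add: Mmap_def hmap_def vmap_def dimM_def numeral_2_eq_2)

lemma M_ag: "(Mmap (1,0) (1,2) :: 'k::field mat) = 0\<^sub>m 1 1"
  by (rule eq_matI) (auto simp: Mmap_def hmap_def vmap_def dimM_def numeral_2_eq_2 scalar_prod_def)
lemma M_cc: "(Mmap (0,1) (0,1) :: 'k::field mat) = 1\<^sub>m 1"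
  by (simp add: Mmap_def hmap_def vmap_def dimM_def numeral_2_eq_2)
lemma M_ce: "(Mmap (0,1) (2,1) :: 'k::field mat) = 1\<^sub>m 1"
  by (rule eq_matI) (auto simp: Mmap_def hmap_def vmap_def dimM_def numeral_2_eq_2 scalar_prod_def)
lemma M_cg: "(Mmap (0,1) (1,2) :: 'k::field mat) = 1\<^sub>m 1"
  by (rule eq_matI) (auto simp: Mmap_def hmap_def vmap_def dimM_def numeral_2_eq_2 scalar_prod_def)
lemma M_ee: "(Mmap (2,1) (2,1) :: 'k::field mat) = 1\<^sub>m 1"
  by (simp add: Mmap_def hmap_def vmap_def dimM_def numeral_2_eq_2)

lemma T: fixes B :: "(nat\<times>nat) set multiset"
  assumes ae: "size (filter_mset (\<lambda>S. (1::nat,0::nat) \<in> S \<and> (2,1) \<in> S) B) = 1"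
  and ag: "size (filter_mset (\<lambda>S. (1::nat,0::nat) \<in> S \<and> (1,2) \<in> S) B) = 0"
  and cc: "size (filter_mset (\<lambda>S. (0::nat,1::nat) \<in> S \<and> (0,1) \<in> S) B) = 1"
  and ce: "size (filter_mset (\<lambda>S. (0::nat,1::nat) \<in> S \<and> (2,1) \<in> S) B) = 1"
  and cg: "size (filter_mset (\<lambda>S. (0::nat,1::nat) \<in> S \<and> (1,2) \<in> S) B) = 1"
  and ee: "size (filter_mset (\<lambda>S. (2::nat,1::nat) \<in> S \<and> (2,1) \<in> S) B) = 1"
  shows False
proof -
  obtain A where A1: "filter_mset (\<lambda>S. (1::nat,0::nat) \<in> S \<and> (2,1) \<in> S) B = {#A#}"
    using ae size_1_singleton_mset by blast
  have A: "A \<in># B" "(1,0) \<in> A" "(2,1) \<in> A"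
    using arg_cong[OF A1, of set_mset] by auto
  have Ag: "(1,2) \<notin> A"
  proof
    assume "(1,2) \<in> A"
    then have "A \<in># filter_mset (\<lambda>S. (1::nat,0::nat) \<in> S \<and> (1,2) \<in> S) B" using A by simp
    then show False using ag by auto
  qed
  obtain C where C1: "filter_mset (\<lambda>S. (0::nat,1::nat) \<in> S \<and> (1,2) \<in> S) B = {#C#}"
    using cg size_1_singleton_mset by blast
  have C: "C \<in># B" "(0,1) \<in> C" "(1,2) \<in> C"
    using arg_cong[OF C1, of set_mset] by auto
  obtain Y where Y: "filter_mset (\<lambda>S. (0::nat,1::nat) \<in> S \<and> (0,1) \<in> S) B = {#Y#}"
    using cc size_1_singleton_mset by blast
  obtain Z where Z1: "filter_mset (\<lambda>S. (0::nat,1::nat) \<in> S \<and> (2,1) \<in> S) B = {#Z#}"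
    using ce size_1_singleton_mset by blast
  have Z: "Z \<in># B" "(0,1) \<in> Z" "(2,1) \<in> Z"
    using arg_cong[OF Z1, of set_mset] by auto
  have "C \<in># {#Y#}" unfolding Y[symmetric] using C by simp
  moreover have "Z \<in># {#Y#}" unfolding Y[symmetric] using Z by simp
  ultimately have Ce: "(2,1) \<in> C" using Z by simp
  obtain X where X: "filter_mset (\<lambda>S. (2::nat,1::nat) \<in> S \<and> (2,1) \<in> S) B = {#X#}"
    using ee size_1_singleton_mset by blast
  have "A \<in># {#X#}" unfolding X[symmetric] using A by simp
  moreover have "C \<in># {#X#}" unfolding X[symmetric] using C Ce by simp
  ultimately show False using Ag C by simp
qed

theorem mainTheorem1:
  shows "\<not> (\<exists>B. good_barcode B TYPE('k::field))"
proof
  assume "\<exists>B. good_barcode B TYPE('k::field)"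
  then obtain B where gb: "good_barcode B TYPE('k)" by blast
  have inP: "(1,0) \<in> gridP" "(2,1) \<in> gridP" "(1,2) \<in> gridP" "(0,1) \<in> gridP"
    by (auto simp: gridP_def)
  have R: "\<And>x y. x \<in> gridP \<Longrightarrow> y \<in> gridP \<Longrightarrow> gle x y \<Longrightarrow>
     map_rank (Mmap x y :: 'k mat) = size (filter_mset (\<lambda>S. x \<in> S \<and> y \<in> S) B)"
    using gb unfolding good_barcode_def by blast
  show False
  proof (rule T[of B])
    show "size (filter_mset (\<lambda>S. (1,0) \<in> S \<and> (2,1) \<in> S) B) = 1"
      using R[OF inP(1) inP(2)] M_ae[where 'k='k] rank_one1[where 'k='k] by (simp add: gle_def)
    show "size (filter_mset (\<lambda>S. (1,0) \<in> S \<and> (1,2) \<in> S) B) = 0"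
      using R[OF inP(1) inP(3)] M_ag[where 'k='k] rank_zero1[where 'k='k] by (simp add: gle_def)
    show "size (filter_mset (\<lambda>S. (0,1) \<in> S \<and> (0,1) \<in> S) B) = 1"
      using R[OF inP(4) inP(4)] M_cc[where 'k='k] rank_one1[where 'k='k] by (simp add: gle_def)
    show "size (filter_mset (\<lambda>S. (0,1) \<in> S \<and> (2,1) \<in> S) B) = 1"
      using R[OF inP(4) inP(2)] M_ce[where 'k='k] rank_one1[where 'k='k] by (simp add: gle_def)
    show "size (filter_mset (\<lambda>S. (0,1) \<in> S \<and> (1,2) \<in> S) B) = 1"
      using R[OF inP(4) inP(3)] M_cg[where 'k='k] rank_one1[where 'k='k] by (simp add: gle_def)
    show "size (filter_mset (\<lambda>S. (2,1) \<in> S \<and> (2,1) \<in> S) B) = 1"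
      using R[OF inP(2) inP(2)] M_ee[where 'k='k] rank_one1[where 'k='k] by (simp add: gle_def)
  qed
qed

end
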